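(* Let $A$ be a non-empty set, $I$ a non-empty index set, $\{V_i\}_{i\in I}\subseteq\mathcal R(A)$, $E$ a fuzzy equivalence on $A$, and $(A/E,I,V_i^{A/E})$ the quotient fuzzy relational system of $(A,I,V_i)$ with respect to $E$. Let $E^\natural\in\mathcal R(A,A/E)$ be defined by $E^\natural(a_1,E_{a_2})=E(a_1,a_2)$. The following are equivalent: (i) $E$ is a solution to $WL^{1\text{-}4}(A,I,V_i)$; (ii) $E^\natural$ is a solution to $WL^{2\text{-}3}(A,A/E,I,V_i,V_i^{A/E})$; (iii) $E^\natural$ is a solution to $WL^{2\text{-}5}(A,A/E,I,V_i,V_i^{A/E})$.
   Context: $\mathcal L=(L,\wedge,\vee,\otimes,\to,0,1)$ is a complete residuated lattice. For non-empty sets $X,Y$, $\mathcal R(X,Y)$ is the set of fuzzy relations $X\times Y\to L$, $\mathcal R(X)=\mathcal R(X,X)$, ordered pointwise; $R^{-1}(y,x)=R(x,y)$; $(R\circ S)(x,t)=\bigvee_{y}R(x,y)\otimes S(y,t)$. A fuzzy equivalence $E$ on $A$ is reflexive ($E(a,a)=1$), symmetric and transitive ($E(a,b)\otimes E(b,c)\le E(a,c)$). $E_a(x)=E(a,x)$, $A/E=\{E_a:a\in A\}$, and $V_i^{A/E}(E_{a_1},E_{a_2})=(E\circ V_i\circ E)(a_1,a_2)$ (well defined). $WL^{1\text{-}4}(A,I,V_i)$ (unknown $U\in\mathcal R(A)$): $U\circ V_i\le V_i\circ U$ and $U^{-1}\circ V_i\le V_i\circ U^{-1}$ for all $i\in I$.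 For $\{W_i\}\subseteq\mathcal R(Q)$ and unknown $U\in\mathcal R(P,Q)$: $WL^{2\text{-}3}(P,Q,I,V_i,W_i)$: $U^{-1}\circ V_i\le W_i\circ U^{-1}$ and $U\circ W_i\le V_i\circ U$ for all $i\in I$; $WL^{2\text{-}5}(P,Q,I,V_i,W_i)$: $V_i\circ U=U\circ W_i$ for all $i\in I$. *)

theory Defs
  imports Main
begin

text \<open>Complete residuated lattice: the carrier is a type 'l of class complete_lattice
  (0 = bot, 1 = top), with multiplication m and residuum r.\<close>
definition complete_residuated_lattice ::
  "('l::complete_lattice \<Rightarrow> 'l \<Rightarrow> 'l) \<Rightarrow> ('l \<Rightarrow> 'l \<Rightarrow> 'l) \<Rightarrow> bool" where
  "complete_residuated_lattice m r \<longleftrightarrow>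
     (\<forall>x y z. m (m x y) z = m x (m y z)) \<and>
     (\<forall>x y. m x y = m y x) \<and>
     (\<forall>x. m x top = x) \<and>
     (\<forall>x y z. m x y \<le> z \<longleftrightarrow> x \<le> r y z)"

definition rcomp :: "('l::complete_lattice \<Rightarrow> 'l \<Rightarrow> 'l) \<Rightarrow> 'b set \<Rightarrow>
    ('a \<Rightarrow> 'b \<Rightarrow> 'l) \<Rightarrow> ('b \<Rightarrow> 'c \<Rightarrow> 'l) \<Rightarrow> 'a \<Rightarrow> 'c \<Rightarrow> 'l" where
  "rcomp m Y R S = (\<lambda>x t. SUP y\<in>Y. m (R x y) (S y t))"

definition rinv :: "('a \<Rightarrow> 'b \<Rightarrow> 'l) \<Rightarrow> 'b \<Rightarrow> 'a \<Rightarrow> 'l" where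
  "rinv R = (\<lambda>y x. R x y)"

definition rle :: "'a set \<Rightarrow> 'b set \<Rightarrow> ('a \<Rightarrow> 'b \<Rightarrow> 'l::order) \<Rightarrow> ('a \<Rightarrow> 'b \<Rightarrow> 'l) \<Rightarrow> bool" where
  "rle X Y R S \<longleftrightarrow> (\<forall>x\<in>X. \<forall>y\<in>Y. R x y \<le> S x y)"

definition fuzzy_equiv :: "('l::complete_lattice \<Rightarrow> 'l \<Rightarrow> 'l) \<Rightarrow> 'a set \<Rightarrow> ('a \<Rightarrow> 'a \<Rightarrow> 'l) \<Rightarrow> bool" where
  "fuzzy_equiv m A E \<longleftrightarrow>
     (\<forall>a\<in>A. E a a = top) \<and>
     (\<forall>a\<in>A. \<forall>b\<in>A. E a b = E b a) \<and>
     (\<forall>a\<in>A. \<forall>b\<in>A. \<forall>c\<in>A. m (E a b) (E b c) \<le> E a c)"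

definition eclass :: "'a set \<Rightarrow> ('a \<Rightarrow> 'a \<Rightarrow> 'l::complete_lattice) \<Rightarrow> 'a \<Rightarrow> 'a \<Rightarrow> 'l" where
  "eclass A E a = (\<lambda>x. if x \<in> A then E a x else bot)"

definition quot :: "'a set \<Rightarrow> ('a \<Rightarrow> 'a \<Rightarrow> 'l::complete_lattice) \<Rightarrow> ('a \<Rightarrow> 'l) set" where
  "quot A E = eclass A E ` A"

definition crep :: "'a set \<Rightarrow> ('a \<Rightarrow> 'a \<Rightarrow> 'l::complete_lattice) \<Rightarrow> ('a \<Rightarrow> 'l) \<Rightarrow> 'a" where
  "crep A E q = (SOME a. a \<in> A \<and> q = eclass A E a)"

definition quot_rel :: "('l::complete_lattice \<Rightarrow> 'l \<Rightarrow> 'l) \<Rightarrow> 'a set \<Rightarrow> ('a \<Rightarrow> 'a \<Rightarrow> 'l)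
    \<Rightarrow> ('a \<Rightarrow> 'a \<Rightarrow> 'l) \<Rightarrow> ('a \<Rightarrow> 'l) \<Rightarrow> ('a \<Rightarrow> 'l) \<Rightarrow> 'l" where
  "quot_rel m A E V q1 q2 = rcomp m A (rcomp m A E V) E (crep A E q1) (crep A E q2)"

definition enat :: "'a set \<Rightarrow> ('a \<Rightarrow> 'a \<Rightarrow> 'l::complete_lattice) \<Rightarrow> 'a \<Rightarrow> ('a \<Rightarrow> 'l) \<Rightarrow> 'l" where
  "enat A E a1 q = E a1 (crep A E q)"

definition WL14 :: "('l::complete_lattice \<Rightarrow> 'l \<Rightarrow> 'l) \<Rightarrow> 'a set \<Rightarrow> 'i set
    \<Rightarrow> ('i \<Rightarrow> 'a \<Rightarrow> 'a \<Rightarrow> 'l) \<Rightarrow> ('a \<Rightarrow> 'a \<Rightarrow> 'l) \<Rightarrow> bool" where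
  "WL14 m A I V U \<longleftrightarrow> (\<forall>i\<in>I.
     rle A A (rcomp m A U (V i)) (rcomp m A (V i) U) \<and>
     rle A A (rcomp m A (rinv U) (V i)) (rcomp m A (V i) (rinv U)))"

definition WL23 :: "('l::complete_lattice \<Rightarrow> 'l \<Rightarrow> 'l) \<Rightarrow> 'p set \<Rightarrow> 'q set \<Rightarrow> 'i set
    \<Rightarrow> ('i \<Rightarrow> 'p \<Rightarrow> 'p \<Rightarrow> 'l) \<Rightarrow> ('i \<Rightarrow> 'q \<Rightarrow> 'q \<Rightarrow> 'l) \<Rightarrow> ('p \<Rightarrow> 'q \<Rightarrow> 'l) \<Rightarrow> bool" where
  "WL23 m P Q I V W U \<longleftrightarrow> (\<forall>i\<in>I.
     rle Q P (rcomp m P (rinv U) (V i)) (rcomp m Q (W i) (rinv U)) \<and>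
     rle P Q (rcomp m Q U (W i)) (rcomp m P (V i) U))"

definition WL25 :: "('l::complete_lattice \<Rightarrow> 'l \<Rightarrow> 'l) \<Rightarrow> 'p set \<Rightarrow> 'q set \<Rightarrow> 'i set
    \<Rightarrow> ('i \<Rightarrow> 'p \<Rightarrow> 'p \<Rightarrow> 'l) \<Rightarrow> ('i \<Rightarrow> 'q \<Rightarrow> 'q \<Rightarrow> 'l) \<Rightarrow> ('p \<Rightarrow> 'q \<Rightarrow> 'l) \<Rightarrow> bool" where
  "WL25 m P Q I V W U \<longleftrightarrow> (\<forall>i\<in>I. \<forall>x\<in>P. \<forall>t\<in>Q.
     rcomp m P (V i) U x t = rcomp m Q U (W i) x t)"

end

theory Submission
  imports Defs
begin

lemma crl_mono:
  assumes "complete_residuated_lattice m r" "x \<le> x'" "y \<le> y'"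
  shows "m x y \<le> m x' y'"
proof -
  have res: "\<And>x y z. m x y \<le> z \<longleftrightarrow> x \<le> r y z" and com: "\<And>x y. m x y = m y x"
    using assms(1) unfolding complete_residuated_lattice_def by auto
  have 1: "\<And>a a' b. a \<le> a' \<Longrightarrow> m a b \<le> m a' b"
    by (metis res order_trans order_refl)
  show ?thesis using 1[OF assms(2), of y] 1[OF assms(3), of x'] com
    by (metis order_trans)
qed

lemma crl_sup_left:
  assumes "complete_residuated_lattice m r"
  shows "m (SUP y\<in>Y. f y) z = (SUP y\<in>Y. m (f y) z)"
proof (rule antisym)
  have res: "\<And>x y z. m x y \<le> z \<longleftrightarrow> x \<le> r y z"
    using assms(1) unfolding complete_residuated_lattice_def by auto
  show "m (SUP y\<in>Y. f y) z \<le> (SUP y\<in>Y. m (f y) z)"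
    unfolding res by (rule SUP_least) (metis res SUP_upper)
  show "(SUP y\<in>Y. m (f y) z) \<le> m (SUP y\<in>Y. f y) z"
    by (rule SUP_least) (rule crl_mono[OF assms], auto intro: SUP_upper)
qed

lemma crl_sup_right:
  assumes "complete_residuated_lattice m r"
  shows "m z (SUP y\<in>Y. f y) = (SUP y\<in>Y. m z (f y))"
proof -
  have com: "\<And>x y. m x y = m y x"
    using assms(1) unfolding complete_residuated_lattice_def by auto
  show ?thesis using crl_sup_left[OF assms, of f Y z] by (simp add: com)
qed

lemma rcomp_assoc:
  assumes "complete_residuated_lattice m r"
  shows "rcomp m B (rcomp m A R S) T = rcomp m A R (rcomp m B S T)"
proof (intro ext)
  fix x t
  have as: "\<And>x y z. m (m x y) z = m x (m y z)"
    using assms(1) unfolding complete_residuated_lattice_def by auto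
  have "rcomp m B (rcomp m A R S) T x t = (SUP b\<in>B. SUP a\<in>A. m (m (R x a) (S a b)) (T b t))"
    unfolding rcomp_def by (simp add: crl_sup_left[OF assms])
  also have "\<dots> = (SUP a\<in>A. SUP b\<in>B. m (R x a) (m (S a b) (T b t)))"
    by (subst SUP_commute) (simp add: as)
  also have "\<dots> = rcomp m A R (rcomp m B S T) x t"
    unfolding rcomp_def by (simp add: crl_sup_right[OF assms])
  finally show "rcomp m B (rcomp m A R S) T x t = rcomp m A R (rcomp m B S T) x t" .
qed

lemma crep_props:
  assumes "q \<in> quot A E"
  shows "crep A E q \<in> A \<and> q = eclass A E (crep A E q)"
proof -
  from assms obtain a where "a \<in> A" "q = eclass A E a" unfolding quot_def by auto
  then show ?thesis unfolding crep_def by (metis (mono_tags, lifting) someI)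
qed

lemma crep_eq:
  assumes fe: "fuzzy_equiv m A E" and a: "a \<in> A" and x: "x \<in> A"
  shows "E (crep A E (eclass A E a)) x = E a x" "E x (crep A E (eclass A E a)) = E x a"
proof -
  have q: "eclass A E a \<in> quot A E" using a unfolding quot_def by auto
  note cp = crep_props[OF q]
  let ?c = "crep A E (eclass A E a)"
  have "eclass A E ?c x = eclass A E a x" using cp by metis
  then show 1: "E ?c x = E a x" using x unfolding eclass_def by simp
  show "E x ?c = E x a" using 1 fe cp a x unfolding fuzzy_equiv_def by metis
qed

lemma EE:
  assumes crl: "complete_residuated_lattice m r" and fe: "fuzzy_equiv m A E"
    and x: "x \<in> A" and y: "y \<in> A"
  shows "rcomp m A E E x y = E x y"
proof (rule antisym)
  show "rcomp m A E E x y \<le> E x y" unfolding rcomp_def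
  proof (rule SUP_least)
    fix a assume "a \<in> A"
    then show "m (E x a) (E a y) \<le> E x y" using fe x y unfolding fuzzy_equiv_def by blast
  qed
  have "E x y = m (E x y) (E y y)" using crl fe y
    unfolding complete_residuated_lattice_def fuzzy_equiv_def by metis
  also have "\<dots> \<le> rcomp m A E E x y" unfolding rcomp_def using y by (rule SUP_upper)
  finally show "E x y \<le> rcomp m A E E x y" .
qed

lemma EE_left:
  assumes crl: "complete_residuated_lattice m r" and fe: "fuzzy_equiv m A E" and x: "x \<in> A"
  shows "rcomp m A (rcomp m A E E) S x t = rcomp m A E S x t"
  unfolding rcomp_def[of m A "rcomp m A E E"] rcomp_def[of m A E S]
  using EE[OF crl fe x] by simp

lemma EE_right:
  assumes crl: "complete_residuated_lattice m r" and fe: "fuzzy_equiv m A E" and x: "x \<in> A"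
  shows "rcomp m A R (rcomp m A E E) y x = rcomp m A R E y x"
  unfolding rcomp_def[of m A R "rcomp m A E E"] rcomp_def[of m A R E]
  using EE[OF crl fe _ x] by simp

lemma crep_l:
  assumes fe: "fuzzy_equiv m A E" and a: "a \<in> A"
  shows "rcomp m A E S (crep A E (eclass A E a)) y = rcomp m A E S a y"
  unfolding rcomp_def using crep_eq(1)[OF fe a] by simp

lemma crep_r:
  assumes fe: "fuzzy_equiv m A E" and a: "a \<in> A"
  shows "rcomp m A S E y (crep A E (eclass A E a)) = rcomp m A S E y a"
  unfolding rcomp_def using crep_eq(2)[OF fe a] by simp

lemma crep_EVE:
  assumes crl: "complete_residuated_lattice m r" and fe: "fuzzy_equiv m A E"
    and a: "a \<in> A" and t: "t \<in> A"
  shows "rcomp m A (rcomp m A E V) E (crep A E (eclass A E a)) (crep A E (eclass A E t))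
       = rcomp m A (rcomp m A E V) E a t"
  using crep_r[OF fe t] crep_l[OF fe a] rcomp_assoc[OF crl] by metis

lemma SUP_quot:
  "(SUP q\<in>quot A E. f q) = (SUP a\<in>A. f (eclass A E a))"
  unfolding quot_def by (simp add: image_comp)

lemma red_a:
  assumes crl: "complete_residuated_lattice m r" and fe: "fuzzy_equiv m A E"
    and x: "x \<in> A" and t: "t \<in> A"
  shows "rcomp m (quot A E) (enat A E) (quot_rel m A E V) x (eclass A E t)
       = rcomp m A (rcomp m A E V) E x t"
proof -
  have "rcomp m (quot A E) (enat A E) (quot_rel m A E V) x (eclass A E t)
      = (SUP a\<in>A. m (E x a) (rcomp m A (rcomp m A E V) E a t))"
    unfolding rcomp_def[of m "quot A E"] SUP_quot enat_def quot_rel_def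
    using crep_EVE[OF crl fe _ t] crep_eq(2)[OF fe _ x] by simp
  also have "\<dots> = rcomp m A E (rcomp m A (rcomp m A E V) E) x t"
    by (simp only: rcomp_def[of m A E "rcomp m A (rcomp m A E V) E"])
  also have "\<dots> = rcomp m A E (rcomp m A E (rcomp m A V E)) x t"
    by (simp add: rcomp_assoc[OF crl])
  also have "\<dots> = rcomp m A (rcomp m A E V) E x t"
    by (metis rcomp_assoc[OF crl] EE_left[OF crl fe x])
  finally show ?thesis .
qed

lemma red_b:
  assumes fe: "fuzzy_equiv m A E" and t: "t \<in> A"
  shows "rcomp m A V (enat A E) x (eclass A E t) = rcomp m A V E x t"
  unfolding enat_def rcomp_def using crep_eq(2)[OF fe t] by simp

lemma red_c:
  assumes fe: "fuzzy_equiv m A E" and t: "t \<in> A" and x: "x \<in> A"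
  shows "rcomp m A (rinv (enat A E)) V (eclass A E t) x = rcomp m A E V t x"
proof -
  have "\<And>a. a \<in> A \<Longrightarrow> E a (crep A E (eclass A E t)) = E t a"
    using crep_eq(2)[OF fe t] fe t unfolding fuzzy_equiv_def by metis
  then show ?thesis unfolding enat_def rinv_def rcomp_def by simp
qed

lemma red_d:
  assumes crl: "complete_residuated_lattice m r" and fe: "fuzzy_equiv m A E"
    and x: "x \<in> A" and t: "t \<in> A"
  shows "rcomp m (quot A E) (quot_rel m A E V) (rinv (enat A E)) (eclass A E t) x
       = rcomp m A (rcomp m A E V) E t x"
proof -
  have sy: "\<And>a. a \<in> A \<Longrightarrow> E x (crep A E (eclass A E a)) = E a x"
    using crep_eq(2)[OF fe _ x] fe x unfolding fuzzy_equiv_def by metis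
  have "rcomp m (quot A E) (quot_rel m A E V) (rinv (enat A E)) (eclass A E t) x
      = (SUP a\<in>A. m (rcomp m A (rcomp m A E V) E t a) (E a x))"
    unfolding rcomp_def[of m "quot A E"] SUP_quot enat_def quot_rel_def rinv_def
    using crep_EVE[OF crl fe t] sy by simp
  also have "\<dots> = rcomp m A (rcomp m A (rcomp m A E V) E) E t x"
    by (simp only: rcomp_def[of m A "rcomp m A (rcomp m A E V) E" E])
  also have "\<dots> = rcomp m A (rcomp m A E V) E t x"
    by (metis rcomp_assoc[OF crl] EE_right[OF crl fe x])
  finally show ?thesis .
qed

lemma ineq1:
  assumes crl: "complete_residuated_lattice m r" and fe: "fuzzy_equiv m A E"
    and x: "x \<in> A" and t: "t \<in> A"
  shows "rcomp m A E V x t \<le> rcomp m A (rcomp m A E V) E x t"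
proof -
  have "rcomp m A E V x t = m (rcomp m A E V x t) (E t t)"
    using crl fe t unfolding complete_residuated_lattice_def fuzzy_equiv_def by metis
  also have "\<dots> \<le> rcomp m A (rcomp m A E V) E x t"
    by (simp only: rcomp_def[of m A "rcomp m A E V" E]) (rule SUP_upper[OF t])
  finally show ?thesis .
qed

lemma ineq2:
  assumes crl: "complete_residuated_lattice m r" and fe: "fuzzy_equiv m A E"
    and x: "x \<in> A" and t: "t \<in> A"
  shows "rcomp m A V E x t \<le> rcomp m A (rcomp m A E V) E x t"
proof -
  have "rcomp m A V E x t = m (E x x) (rcomp m A V E x t)"
    using crl fe x unfolding complete_residuated_lattice_def fuzzy_equiv_def by metis
  also have "\<dots> \<le> rcomp m A E (rcomp m A V E) x t"
    by (simp only: rcomp_def[of m A E "rcomp m A V E"]) (rule SUP_upper[OF x])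
  finally show ?thesis by (simp add: rcomp_assoc[OF crl])
qed

lemma ineq3:
  assumes crl: "complete_residuated_lattice m r" and fe: "fuzzy_equiv m A E"
    and h: "\<forall>x\<in>A. \<forall>t\<in>A. rcomp m A E V x t \<le> rcomp m A V E x t"
    and x: "x \<in> A" and t: "t \<in> A"
  shows "rcomp m A (rcomp m A E V) E x t \<le> rcomp m A V E x t"
proof -
  have "rcomp m A (rcomp m A E V) E x t \<le> rcomp m A (rcomp m A V E) E x t"
    unfolding rcomp_def[of m A "rcomp m A E V" E] rcomp_def[of m A "rcomp m A V E" E]
    proof (rule SUP_subset_mono[OF subset_refl])
      fix b assume "b \<in> A"
      then show "m (rcomp m A E V x b) (E b t) \<le> m (rcomp m A V E x b) (E b t)"
        using h x by (intro crl_mono[OF crl]) auto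
    qed
  also have "\<dots> = rcomp m A V E x t"
    by (metis rcomp_assoc[OF crl] EE_right[OF crl fe t])
  finally show ?thesis .
qed

lemma rinv_E:
  assumes fe: "fuzzy_equiv m A E" and x: "x \<in> A" and y: "y \<in> A"
  shows "rcomp m A (rinv E) V x y = rcomp m A E V x y"
        "rcomp m A V (rinv E) x y = rcomp m A V E x y"
proof -
  have s: "\<And>a b. a \<in> A \<Longrightarrow> b \<in> A \<Longrightarrow> E a b = E b a" using fe unfolding fuzzy_equiv_def by blast
  show "rcomp m A (rinv E) V x y = rcomp m A E V x y"
    unfolding rcomp_def rinv_def using s[OF x] by simp
  show "rcomp m A V (rinv E) x y = rcomp m A V E x y"
    unfolding rcomp_def rinv_def using s[OF _ y] by simp
qed

lemma ball_quot: "(\<forall>q\<in>quot A E. P q) \<longleftrightarrow> (\<forall>t\<in>A. P (eclass A E t))"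
  unfolding quot_def by blast

theorem theorem6p2:
  fixes m r :: "'l::complete_lattice \<Rightarrow> 'l \<Rightarrow> 'l"
    and A :: "'a set" and I :: "'i set"
    and V :: "'i \<Rightarrow> 'a \<Rightarrow> 'a \<Rightarrow> 'l" and E :: "'a \<Rightarrow> 'a \<Rightarrow> 'l"
  assumes "complete_residuated_lattice m r"
    and "A \<noteq> {}" and "I \<noteq> {}"
    and "fuzzy_equiv m A E"
  shows "(WL14 m A I V E
            \<longleftrightarrow> WL23 m A (quot A E) I V (\<lambda>i. quot_rel m A E (V i)) (enat A E))
       \<and> (WL23 m A (quot A E) I V (\<lambda>i. quot_rel m A E (V i)) (enat A E)
            \<longleftrightarrow> WL25 m A (quot A E) I V (\<lambda>i. quot_rel m A E (V i)) (enat A E))"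
proof -
  note crl = assms(1) and fe = assms(4)
  have w14: "WL14 m A I V E \<longleftrightarrow>
     (\<forall>i\<in>I. \<forall>x\<in>A. \<forall>t\<in>A. rcomp m A E (V i) x t \<le> rcomp m A (V i) E x t)"
    unfolding WL14_def rle_def using rinv_E[OF fe] by auto
  have w23: "WL23 m A (quot A E) I V (\<lambda>i. quot_rel m A E (V i)) (enat A E) \<longleftrightarrow>
     (\<forall>i\<in>I. \<forall>x\<in>A. \<forall>t\<in>A. rcomp m A (rcomp m A E (V i)) E x t \<le> rcomp m A (V i) E x t)"
  proof -
    have "\<And>i x t. x \<in> A \<Longrightarrow> t \<in> A \<Longrightarrow>
      (rcomp m A (rinv (enat A E)) (V i) (eclass A E t) x
          \<le> rcomp m (quot A E) (quot_rel m A E (V i)) (rinv (enat A E)) (eclass A E t) x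
       \<and> rcomp m (quot A E) (enat A E) (quot_rel m A E (V i)) x (eclass A E t)
          \<le> rcomp m A (V i) (enat A E) x (eclass A E t))
      \<longleftrightarrow> rcomp m A (rcomp m A E (V i)) E x t \<le> rcomp m A (V i) E x t"
    proof -
      fix i x t assume x: "x \<in> A" and t: "t \<in> A"
      show "?thesis i x t"
        unfolding red_a[OF crl fe x t] red_b[OF fe t] red_c[OF fe t x] red_d[OF crl fe x t]
        using ineq1[OF crl fe t x, of "V i"] by blast
    qed
    then show ?thesis unfolding WL23_def rle_def ball_quot by blast
  qed
  have w25: "WL25 m A (quot A E) I V (\<lambda>i. quot_rel m A E (V i)) (enat A E) \<longleftrightarrow>
     (\<forall>i\<in>I. \<forall>x\<in>A. \<forall>t\<in>A. rcomp m A (rcomp m A E (V i)) E x t = rcomp m A (V i) E x t)"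
  proof -
    have "\<And>i x t. x \<in> A \<Longrightarrow> t \<in> A \<Longrightarrow>
      (rcomp m A (V i) (enat A E) x (eclass A E t) = rcomp m (quot A E) (enat A E) (quot_rel m A E (V i)) x (eclass A E t))
      \<longleftrightarrow> rcomp m A (rcomp m A E (V i)) E x t = rcomp m A (V i) E x t"
    proof -
      fix i x t assume x: "x \<in> A" and t: "t \<in> A"
      show "?thesis i x t"
        unfolding red_a[OF crl fe x t] red_b[OF fe t] by auto
    qed
    then show ?thesis unfolding WL25_def ball_quot by blast
  qed
  have A: "(\<forall>i\<in>I. \<forall>x\<in>A. \<forall>t\<in>A. rcomp m A E (V i) x t \<le> rcomp m A (V i) E x t)
     \<longleftrightarrow> (\<forall>i\<in>I. \<forall>x\<in>A. \<forall>t\<in>A. rcomp m A (rcomp m A E (V i)) E x t \<le> rcomp m A (V i) E x t)"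
  proof (intro iffI ballI)
    fix i x t assume h: "\<forall>i\<in>I. \<forall>x\<in>A. \<forall>t\<in>A. rcomp m A E (V i) x t \<le> rcomp m A (V i) E x t"
      and i: "i \<in> I" and x: "x \<in> A" and t: "t \<in> A"
    show "rcomp m A (rcomp m A E (V i)) E x t \<le> rcomp m A (V i) E x t"
      using ineq3[OF crl fe _ x t] h i by blast
  next
    fix i x t assume h: "\<forall>i\<in>I. \<forall>x\<in>A. \<forall>t\<in>A. rcomp m A (rcomp m A E (V i)) E x t \<le> rcomp m A (V i) E x t"
      and i: "i \<in> I" and x: "x \<in> A" and t: "t \<in> A"
    show "rcomp m A E (V i) x t \<le> rcomp m A (V i) E x t"
      using ineq1[OF crl fe x t, of "V i"] h i x t by (meson order_trans)
  qed
  have B: "(\<forall>i\<in>I. \<forall>x\<in>A. \<forall>t\<in>A. rcomp m A (rcomp m A E (V i)) E x t \<le> rcomp m A (V i) E x t)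
     \<longleftrightarrow> (\<forall>i\<in>I. \<forall>x\<in>A. \<forall>t\<in>A. rcomp m A (rcomp m A E (V i)) E x t = rcomp m A (V i) E x t)"
  proof (intro iffI ballI)
    fix i x t assume h: "\<forall>i\<in>I. \<forall>x\<in>A. \<forall>t\<in>A. rcomp m A (rcomp m A E (V i)) E x t \<le> rcomp m A (V i) E x t"
      and i: "i \<in> I" and x: "x \<in> A" and t: "t \<in> A"
    show "rcomp m A (rcomp m A E (V i)) E x t = rcomp m A (V i) E x t"
      using ineq2[OF crl fe x t, of "V i"] h i x t by (meson antisym)
  qed auto
  show ?thesis unfolding w14 w23 w25 using A B by blast
qed

end
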